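(* Let $a_1=0$, $a_{j+1}=a_j+\frac2j$, $\omega_j=(x-a_j)\exp((j-1)x)$, and for $n\ge1$ define $$\mathcal P_n=c_n\exp\Big(-\frac{n(n-1)}{2}x\Big)W(\omega_1,\dots,\omega_n),\qquad c_n=\Big[(n-1)!\prod_{1\le i<j\le n-1}(j-i)\Big]^{-1},$$ where $W$ denotes the Wronskian. Then for every $n\ge1$, $$\mathcal P_n'\mathcal P_{n+2}-\mathcal P_n\mathcal P_{n+2}'-(n+1)\mathcal P_n\mathcal P_{n+2}+(n+1)\mathcal P_{n+1}^2=0 .$$ *)

theory Defs
  imports "HOL-Analysis.Derivative" "Jordan_Normal_Form.Determinant"
begin

text \<open>a_1 = 0, a_(j+1) = a_j + 2/j (j >= 1); the value at index 0 is irrelevant.\<close>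
fun a_seq :: "nat \<Rightarrow> real" where
  "a_seq 0 = 0"
| "a_seq (Suc 0) = 0"
| "a_seq (Suc (Suc j)) = a_seq (Suc j) + 2 / real (Suc j)"

definition omega :: "nat \<Rightarrow> real \<Rightarrow> real" where
  "omega j x = (x - a_seq j) * exp ((real j - 1) * x)"

definition wronskian :: "nat \<Rightarrow> (nat \<Rightarrow> real \<Rightarrow> real) \<Rightarrow> real \<Rightarrow> real" where
  "wronskian n f x = det (mat n n (\<lambda>(i, k). (deriv ^^ i) (f (Suc k)) x))"

definition c_const :: "nat \<Rightarrow> real" where
  "c_const n = inverse (fact (n - 1) *
      (\<Prod>j\<in>{1..n - 1}. \<Prod>i\<in>{1..<j}. real (j - i)))"

definition P :: "nat \<Rightarrow> real \<Rightarrow> real" where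
  "P n x = c_const n * exp (- (real n * (real n - 1) / 2) * x) * wronskian n omega x"

end

theory Submission imports Defs "Jordan_Normal_Form.Char_Poly" begin

definition ef :: "real \<Rightarrow> real \<Rightarrow> real \<Rightarrow> nat \<Rightarrow> real \<Rightarrow> real" where
  "ef a b l i x = (l ^ i * (a * x + b) + real i * a * l ^ (i - 1)) * exp (l * x)"

lemma ef_deriv: "(ef a b l i has_real_derivative ef a b l (Suc i) x) (at x)"
proof -
  have "((\<lambda>x. (l ^ i * (a * x + b) + real i * a * l ^ (i - 1)) * exp (l * x)) has_real_derivative
     (l ^ i * a) * exp (l * x) + (l ^ i * (a * x + b) + real i * a * l ^ (i - 1)) * (exp (l * x) * l)) (at x)"
    by (auto intro!: derivative_eq_intros)
  moreover have "(l ^ i * a) * exp (l * x) + (l ^ i * (a * x + b) + real i * a * l ^ (i - 1)) * (exp (l * x) * l)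
     = ef a b l (Suc i) x"
  proof (cases i)
    case 0 then show ?thesis by (simp add: ef_def algebra_simps)
  next
    case (Suc k) then show ?thesis by (simp add: ef_def algebra_simps)
  qed
  ultimately show ?thesis unfolding ef_def[abs_def] by simp
qed

lemma deriv_ef: "deriv (ef a b l i) = ef a b l (Suc i)"
  using ef_deriv DERIV_imp_deriv by blast

lemma iter_deriv_ef: "(deriv ^^ k) (ef a b l i) = ef a b l (i + k)"
  by (induct k) (simp_all add: deriv_ef)

lemma omega_ef: "omega j = ef 1 (- a_seq j) (real j - 1) 0"
  by (simp add: omega_def ef_def fun_eq_iff)

lemma ef_shift: "ef a b l (Suc i) x = ef (l * a) (l * b + a) l i x"
proof (cases i)
  case 0 then show ?thesis by (simp add: ef_def algebra_simps)
next
  case (Suc k) then show ?thesis by (simp add: ef_def algebra_simps)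
qed

lemma ef_one: "ef 0 1 0 i x = (if i = 0 then 1 else 0)"
  by (simp add: ef_def)

lemma det_mat_expand:
  "det (mat m m (\<lambda>(i,k). G i k)) = (\<Sum>p\<in>{p. p permutes {0..<m}}. signof p * (\<Prod>i\<in>{0..<m}. G i (p i)))"
proof -
  have "det (mat m m (\<lambda>(i,k). G i k)) = (\<Sum>p\<in>{p. p permutes {0..<m}}. signof p * (\<Prod>i = 0..<m. (mat m m (\<lambda>(i,k). G i k)) $$ (i, p i)))"
    by (rule det_def') simp
  also have "\<dots> = (\<Sum>p\<in>{p. p permutes {0..<m}}. signof p * (\<Prod>i\<in>{0..<m}. G i (p i)))"
  proof (rule sum.cong[OF refl])
    fix p assume "p \<in> {p. p permutes {0..<m}}"
    then have p: "p permutes {0..<m}" by simp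
    have "\<And>i. i \<in> {0..<m} \<Longrightarrow> p i < m" using permutes_in_image[OF p] by auto
    then show "signof p * (\<Prod>i = 0..<m. (mat m m (\<lambda>(i,k). G i k)) $$ (i, p i)) = signof p * (\<Prod>i\<in>{0..<m}. G i (p i))"
      by (auto intro!: prod.cong)
  qed
  finally show ?thesis .
qed

lemma det_mat_deriv_sum:
  assumes D: "\<And>i k x. (F i k has_real_derivative F (Suc i) k x) (at x)"
  shows "((\<lambda>x. det (mat m m (\<lambda>(i,k). F i k x))) has_real_derivative
          (\<Sum>r\<in>{0..<m}. det (mat m m (\<lambda>(i,k). F (if i = r then Suc i else i) k x)))) (at x)"
proof -
  let ?S = "{p. p permutes {0..<m}}"
  have e1: "(\<lambda>x. det (mat m m (\<lambda>(i,k). F i k x))) = (\<lambda>x. \<Sum>p\<in>?S. signof p * (\<Prod>i\<in>{0..<m}. F i (p i) x))"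
    by (simp add: det_mat_expand)
  have "((\<lambda>x. \<Sum>p\<in>?S. signof p * (\<Prod>i\<in>{0..<m}. F i (p i) x)) has_real_derivative
       (\<Sum>p\<in>?S. signof p * (\<Sum>r\<in>{0..<m}. F (Suc r) (p r) x * (\<Prod>i\<in>{0..<m}-{r}. F i (p i) x)))) (at x)"
    by (intro DERIV_sum DERIV_cmult has_field_derivative_prod D)
  also have "(\<Sum>p\<in>?S. signof p * (\<Sum>r\<in>{0..<m}. F (Suc r) (p r) x * (\<Prod>i\<in>{0..<m}-{r}. F i (p i) x)))
     = (\<Sum>r\<in>{0..<m}. \<Sum>p\<in>?S. signof p * (\<Prod>i\<in>{0..<m}. F (if i = r then Suc i else i) (p i) x))"
  proof -
    have eq: "(\<Prod>i\<in>{0..<m}. F (if i = r then Suc i else i) (p i) x)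
       = F (Suc r) (p r) x * (\<Prod>i\<in>{0..<m}-{r}. F i (p i) x)" if r: "r \<in> {0..<m}" for p r
    proof -
      have "(\<Prod>i\<in>{0..<m}. F (if i = r then Suc i else i) (p i) x)
         = F (if r = r then Suc r else r) (p r) x * (\<Prod>i\<in>{0..<m}-{r}. F (if i = r then Suc i else i) (p i) x)"
        by (rule prod.remove[OF _ r]) simp
      also have "(\<Prod>i\<in>{0..<m}-{r}. F (if i = r then Suc i else i) (p i) x) = (\<Prod>i\<in>{0..<m}-{r}. F i (p i) x)"
        by (rule prod.cong) auto
      finally show ?thesis by simp
    qed
    have "(\<Sum>p\<in>?S. signof p * (\<Sum>r\<in>{0..<m}. F (Suc r) (p r) x * (\<Prod>i\<in>{0..<m}-{r}. F i (p i) x)))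
       = (\<Sum>p\<in>?S. \<Sum>r\<in>{0..<m}. signof p * (\<Prod>i\<in>{0..<m}. F (if i = r then Suc i else i) (p i) x))"
      unfolding sum_distrib_left by (intro sum.cong refl) (simp add: eq)
    also have "\<dots> = (\<Sum>r\<in>{0..<m}. \<Sum>p\<in>?S. signof p * (\<Prod>i\<in>{0..<m}. F (if i = r then Suc i else i) (p i) x))"
      by (rule sum.swap)
    finally show ?thesis .
  qed
  also have "\<dots> = (\<Sum>r\<in>{0..<m}. det (mat m m (\<lambda>(i,k). F (if i = r then Suc i else i) k x)))"
    by (simp add: det_mat_expand)
  finally show ?thesis using e1 by simp
qed

lemma det_mat_deriv:
  assumes D: "\<And>i k x. (F i k has_real_derivative F (Suc i) k x) (at x)" and m: "m \<ge> 1"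
  shows "((\<lambda>x. det (mat m m (\<lambda>(i,k). F i k x))) has_real_derivative
          det (mat m m (\<lambda>(i,k). F (if i = m - 1 then m else i) k x))) (at x)"
proof -
  have z: "det (mat m m (\<lambda>(i,k). F (if i = r then Suc i else i) k x)) = 0" if r: "r < m - 1" for r
  proof (rule det_identical_rows[of _ m r "Suc r"])
    show "row (mat m m (\<lambda>(i,k). F (if i = r then Suc i else i) k x)) r =
          row (mat m m (\<lambda>(i,k). F (if i = r then Suc i else i) k x)) (Suc r)"
      using r by (auto simp: row_mat)
  qed (use r in auto)
  have "(\<Sum>r\<in>{0..<m}. det (mat m m (\<lambda>(i,k). F (if i = r then Suc i else i) k x)))
      = (\<Sum>r\<in>{0..<m-1}. det (mat m m (\<lambda>(i,k). F (if i = r then Suc i else i) k x)))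
        + det (mat m m (\<lambda>(i,k). F (if i = m - 1 then Suc i else i) k x))"
  proof -
    obtain m' where m': "m = Suc m'" using m by (cases m) auto
    show ?thesis unfolding m' by simp
  qed
  also have "\<dots> = det (mat m m (\<lambda>(i,k). F (if i = m - 1 then m else i) k x))"
  proof -
    have "(\<lambda>(i,k). F (if i = m - 1 then Suc i else i) k x) = (\<lambda>(i,k). F (if i = m - 1 then m else i) k x)"
      using m by (auto simp: fun_eq_iff)
    then show ?thesis using z by simp
  qed
  finally show ?thesis using det_mat_deriv_sum[of F m x, OF D] by simp
qed

definition efp :: "real \<times> real \<times> real \<Rightarrow> nat \<Rightarrow> real \<Rightarrow> real" where
  "efp t = ef (fst t) (fst (snd t)) (snd (snd t))"

definition sh :: "real \<times> real \<times> real \<Rightarrow> real \<times> real \<times> real" where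
  "sh t = (snd (snd t) * fst t, snd (snd t) * fst (snd t) + fst t, snd (snd t))"

lemma efp_sh: "efp t (Suc i) x = efp (sh t) i x"
  by (simp add: efp_def sh_def ef_shift)

definition wm :: "nat \<Rightarrow> (nat \<Rightarrow> real \<times> real \<times> real) \<Rightarrow> real \<Rightarrow> real mat" where
  "wm m g x = mat m m (\<lambda>(i,k). efp (g k) i x)"

definition wm' :: "nat \<Rightarrow> (nat \<Rightarrow> real \<times> real \<times> real) \<Rightarrow> real \<Rightarrow> real mat" where
  "wm' m g x = mat m m (\<lambda>(i,k). efp (g k) (if i = m - 1 then m else i) x)"

lemma wm_deriv: assumes "m \<ge> 1"
  shows "((\<lambda>x. det (wm m g x)) has_real_derivative det (wm' m g x)) (at x)"
  unfolding wm_def wm'_def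
  by (rule det_mat_deriv[of "\<lambda>i k x. efp (g k) i x", OF _ assms]) (simp add: efp_def ef_deriv)

definition om :: "nat \<Rightarrow> real \<times> real \<times> real" where
  "om k = (1, - a_seq (Suc k), real k)"

lemma wronskian_wm: "wronskian n omega x = det (wm n om x)"
proof -
  have "(\<lambda>(i, k). (deriv ^^ i) (omega (Suc k)) x) = (\<lambda>(i,k). efp (om k) i x)"
    by (auto simp: fun_eq_iff omega_ef iter_deriv_ef efp_def om_def)
  then show ?thesis unfolding wronskian_def wm_def by simp
qed

definition onef :: "real \<times> real \<times> real" where "onef = (0, 1, 0)"

lemma efp_one: "efp onef i x = (if i = 0 then 1 else 0)"
  by (simp add: efp_def onef_def ef_one)

lemma wm_one:
  assumes gp: "g p = onef" and p: "p < Suc m"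
  shows "det (wm (Suc m) g x) = (-1) ^ p * det (wm m (\<lambda>j. sh (g (if j < p then j else Suc j))) x)"
proof -
  let ?M = "wm (Suc m) g x"
  have M: "?M \<in> carrier_mat (Suc m) (Suc m)" by (simp add: wm_def)
  have "det ?M = (\<Sum>i<Suc m. ?M $$ (i,p) * cofactor ?M i p)"
    by (rule laplace_expansion_column[OF M p])
  also have "\<dots> = (\<Sum>i\<in>{0}. ?M $$ (i,p) * cofactor ?M i p)"
    by (rule sum.mono_neutral_right) (use p gp in \<open>auto simp: wm_def efp_one\<close>)
  also have "\<dots> = cofactor ?M 0 p" using p gp by (simp add: wm_def efp_one)
  also have "\<dots> = (-1) ^ p * det (mat_delete ?M 0 p)" by (simp add: cofactor_def)
  also have "mat_delete ?M 0 p = wm m (\<lambda>j. sh (g (if j < p then j else Suc j))) x"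
    by (rule eq_matI) (auto simp: mat_delete_def wm_def efp_sh)
  finally show ?thesis .
qed

lemma binom_sum1: "(\<Sum>t\<le>i. real (i choose t) * l ^ t) = (l + 1) ^ i"
  using binomial_ring[of l 1 i] by (simp add: add.commute mult.commute)

lemma binom_sum2: "(\<Sum>t\<le>i. real (i choose t) * (real t * l ^ (t - 1))) = real i * (l + 1) ^ (i - 1)"
proof (cases i)
  case 0 then show ?thesis by simp
next
  case (Suc k)
  have "(\<Sum>t\<le>Suc k. real (Suc k choose t) * (real t * l ^ (t - 1)))
      = (\<Sum>s\<le>k. real (Suc k choose Suc s) * (real (Suc s) * l ^ s))"
    by (subst sum.atMost_Suc_shift) simp
  also have "\<dots> = (\<Sum>s\<le>k. real (Suc k) * (real (k choose s) * l ^ s))"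
  proof (rule sum.cong[OF refl])
    fix s
    have "real (Suc s) * real (Suc k choose Suc s) = real (Suc k) * real (k choose s)"
      using Suc_times_binomial[of s k] by (metis of_nat_mult)
    have "real (Suc k choose Suc s) * (real (Suc s) * l ^ s) = (real (Suc s) * real (Suc k choose Suc s)) * l^s"
      by (simp only: mult_ac)
    also have "\<dots> = (real (Suc k) * real (k choose s)) * l^s" by (simp only: \<open>real (Suc s) * real (Suc k choose Suc s) = real (Suc k) * real (k choose s)\<close>)
    finally show "real (Suc k choose Suc s) * (real (Suc s) * l ^ s) = real (Suc k) * (real (k choose s) * l ^ s)"
      by (simp only: mult_ac)
  qed
  also have "\<dots> = real (Suc k) * (l + 1) ^ k"
    by (simp add: sum_distrib_left[symmetric] binom_sum1)
  finally show ?thesis using Suc by simp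
qed

lemma ef_pascal:
  "(\<Sum>t\<le>i. real (i choose t) * exp x * ef a b l t x) = ef a b (l + 1) i x"
proof -
  have "(\<Sum>t\<le>i. real (i choose t) * exp x * ef a b l t x)
     = exp ((l + 1) * x) * ((a * x + b) * (\<Sum>t\<le>i. real (i choose t) * l ^ t)
          + a * (\<Sum>t\<le>i. real (i choose t) * (real t * l ^ (t - 1))))"
    by (simp add: ef_def sum_distrib_left sum_distrib_right sum.distrib algebra_simps exp_add)
  also have "\<dots> = ef a b (l + 1) i x"
    by (simp only: binom_sum1 binom_sum2) (simp add: ef_def algebra_simps exp_add)
  finally show ?thesis .
qed

lemma efp_sh2_om: "efp (sh (sh (om (Suc j)))) i x = (real j + 1)^2 * ef 1 (- a_seq (Suc j)) (real j + 1) i x"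
proof -
  have "efp (sh (sh (om (Suc j)))) i x = efp (om (Suc j)) (Suc (Suc i)) x"
    by (simp add: efp_sh)
  also have "\<dots> = (real j + 1)^2 * ef 1 (- a_seq (Suc j)) (real j + 1) i x"
  proof (cases i)
    case 0 then show ?thesis by (simp add: efp_def om_def ef_def power2_eq_square field_simps)
  next
    case (Suc k) then show ?thesis by (simp add: efp_def om_def ef_def power2_eq_square field_simps)
  qed
  finally show ?thesis .
qed

lemma prod_list_diag: "prod_list (diag_mat (mat m m f)) = (\<Prod>i<m. f (i,i))"
proof -
  have "diag_mat (mat m m f) = map (\<lambda>i. f (i,i)) [0..<m]"
    by (simp add: diag_mat_def)
  then show ?thesis by (simp add: prod.distinct_set_conv_list[symmetric] atLeast0LessThan)
qed

lemma wm_pascal: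
  "det (wm m (\<lambda>j. sh (sh (om (Suc j)))) x) = (fact m)^2 * exp (real m * x) * det (wm m om x)"
proof -
  define L where "L = mat m m (\<lambda>(i,t). if t \<le> i then real (i choose t) * exp x else 0)"
  define Dg where "Dg = mat m m (\<lambda>(i,j). if i = j then (real j + 1)^2 else (0::real))"
  have L: "L \<in> carrier_mat m m" and Dg: "Dg \<in> carrier_mat m m" and W: "wm m om x \<in> carrier_mat m m"
    by (auto simp: L_def Dg_def wm_def)
  have eq: "wm m (\<lambda>j. sh (sh (om (Suc j)))) x = L * (wm m om x * Dg)"
  proof (rule eq_matI)
    fix i j assume i: "i < dim_row (L * (wm m om x * Dg))" and j: "j < dim_col (L * (wm m om x * Dg))"
    then have i: "i < m" and j: "j < m" using L Dg W by auto
    have c1: "(wm m om x * Dg) $$ (t, j) = efp (om j) t x * (real j + 1)^2" if t: "t < m" for t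
    proof -
      have "(wm m om x * Dg) $$ (t, j) = (\<Sum>s<m. efp (om s) t x * (if s = j then (real j + 1)^2 else 0))"
        using t j by (simp add: wm_def Dg_def scalar_prod_def atLeast0LessThan row_def col_def)
      also have "\<dots> = efp (om j) t x * (real j + 1)^2"
        using j by (simp add: if_distrib cong: if_cong)
      finally show ?thesis .
    qed
    have "(L * (wm m om x * Dg)) $$ (i, j) = (\<Sum>t<m. (if t \<le> i then real (i choose t) * exp x else 0) * ((wm m om x * Dg) $$ (t, j)))"
      using i j L Dg W by (simp add: L_def scalar_prod_def atLeast0LessThan row_def col_def)
    also have "\<dots> = (\<Sum>t\<le>i. real (i choose t) * exp x * (efp (om j) t x * (real j + 1)^2))"
    proof -
      have "(\<Sum>t<m. (if t \<le> i then real (i choose t) * exp x else 0) * ((wm m om x * Dg) $$ (t, j)))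
          = (\<Sum>t\<in>{..i}. (if t \<le> i then real (i choose t) * exp x else 0) * ((wm m om x * Dg) $$ (t, j)))"
        by (rule sum.mono_neutral_right) (use i in auto)
      also have "\<dots> = (\<Sum>t\<le>i. real (i choose t) * exp x * (efp (om j) t x * (real j + 1)^2))"
        by (rule sum.cong[OF refl]) (use i in \<open>auto simp: c1\<close>)
      finally show ?thesis .
    qed
    also have "\<dots> = (real j + 1)^2 * (\<Sum>t\<le>i. real (i choose t) * exp x * ef 1 (- a_seq (Suc j)) (real j) t x)"
      by (simp add: sum_distrib_left efp_def om_def algebra_simps)
    also have "\<dots> = (real j + 1)^2 * ef 1 (- a_seq (Suc j)) (real j + 1) i x"
      by (simp add: ef_pascal)
    also have "\<dots> = wm m (\<lambda>j. sh (sh (om (Suc j)))) x $$ (i, j)"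
      using i j by (simp add: wm_def efp_sh2_om)
    finally show "wm m (\<lambda>j. sh (sh (om (Suc j)))) x $$ (i, j) = (L * (wm m om x * Dg)) $$ (i, j)" by simp
  qed (use L Dg W in \<open>auto simp: wm_def\<close>)
  have dL: "det L = exp (real m * x)"
  proof -
    have "det L = prod_list (diag_mat L)"
      by (rule det_lower_triangular[OF _ L]) (simp add: L_def)
    also have "\<dots> = (\<Prod>i<m. exp x)" unfolding L_def prod_list_diag by simp
    also have "\<dots> = exp (real m * x)" by (simp add: exp_of_nat_mult)
    finally show ?thesis .
  qed
  have dD: "det Dg = (fact m)^2"
  proof -
    have "det Dg = prod_list (diag_mat Dg)"
      by (rule det_upper_triangular[OF _ Dg]) (auto simp: Dg_def upper_triangular_def)
    also have "\<dots> = (\<Prod>i<m. (real i + 1)^2)" unfolding Dg_def prod_list_diag by simp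
    also have "\<dots> = (\<Prod>i<m. real (Suc i))^2" by (simp add: prod_power_distrib add.commute)
    also have "\<dots> = (fact m)^2" by (simp add: fact_prod_Suc atLeast0LessThan)
    finally show ?thesis .
  qed
  have "det (wm m (\<lambda>j. sh (sh (om (Suc j)))) x) = det L * (det (wm m om x) * det Dg)"
    unfolding eq using L Dg W by (simp add: det_mult[of _ m])
  then show ?thesis using dL dD by simp
qed

lemma schur_det:
  fixes B C D E Bi :: "real mat"
  assumes B: "B \<in> carrier_mat k k" and C: "C \<in> carrier_mat k m" and D: "D \<in> carrier_mat m k"
    and E: "E \<in> carrier_mat m m" and Bi: "Bi \<in> carrier_mat k k" and BBi: "B * Bi = 1\<^sub>m k"
  shows "det (four_block_mat B C D E) = det B * det (E - D * Bi * C)"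
proof -
  define S where "S = E - D * Bi * C"
  have S: "S \<in> carrier_mat m m" unfolding S_def using D Bi C by (intro minus_carrier_mat) auto
  have BiC: "Bi * C \<in> carrier_mat k m" using Bi C by simp
  have f1: "four_block_mat B (0\<^sub>m k m) D (1\<^sub>m m) * four_block_mat (1\<^sub>m k) (Bi * C) (0\<^sub>m m k) S
    = four_block_mat (B * 1\<^sub>m k + 0\<^sub>m k m * 0\<^sub>m m k) (B * (Bi * C) + 0\<^sub>m k m * S)
        (D * 1\<^sub>m k + 1\<^sub>m m * 0\<^sub>m m k) (D * (Bi * C) + 1\<^sub>m m * S)"
    by (rule mult_four_block_mat) (use B D BiC S in auto)
  have e1: "B * 1\<^sub>m k + 0\<^sub>m k m * 0\<^sub>m m k = B" using B by simp
  have e2: "B * (Bi * C) + 0\<^sub>m k m * S = C"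
  proof -
    have "B * (Bi * C) = (B * Bi) * C" using B Bi C by simp
    also have "\<dots> = C" using BBi C by simp
    finally show ?thesis using C S by simp
  qed
  have e3: "D * 1\<^sub>m k + 1\<^sub>m m * 0\<^sub>m m k = D" using D by simp
  have e4: "D * (Bi * C) + 1\<^sub>m m * S = E"
  proof -
    have "D * (Bi * C) = D * Bi * C" using D Bi C by simp
    moreover have "1\<^sub>m m * S = S" using S by simp
    ultimately have "D * (Bi * C) + 1\<^sub>m m * S = D * Bi * C + (E - D * Bi * C)" unfolding S_def by simp
    also have "\<dots> = E"
      by (rule eq_matI) (use D Bi C E in auto)
    finally show ?thesis .
  qed
  have eq: "four_block_mat B C D E = four_block_mat B (0\<^sub>m k m) D (1\<^sub>m m) * four_block_mat (1\<^sub>m k) (Bi * C) (0\<^sub>m m k) S"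
    unfolding f1 e1 e2 e3 e4 ..
  have d1: "det (four_block_mat B (0\<^sub>m k m) D (1\<^sub>m m)) = det B"
    using det_four_block_mat_upper_right_zero[OF B refl D, of "1\<^sub>m m"] by simp
  have d2: "det (four_block_mat (1\<^sub>m k) (Bi * C) (0\<^sub>m m k) S) = det S"
    using det_four_block_mat_lower_left_zero[of "1\<^sub>m k" k "Bi * C" m, OF _ BiC refl S] by simp
  have "det (four_block_mat B C D E) = det (four_block_mat B (0\<^sub>m k m) D (1\<^sub>m m)) * det (four_block_mat (1\<^sub>m k) (Bi * C) (0\<^sub>m m k) S)"
    unfolding eq by (rule det_mult[of _ "k + m"]) (use B D BiC S in auto)
  then show ?thesis using d1 d2 S_def by simp
qed

lemma det_2x2: "det (mat 2 2 f) = f (0,0) * f (1,1) - f (0,1) * f (1,0)"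
proof -
  let ?M = "mat 2 2 f"
  have M: "?M \<in> carrier_mat 2 2" by simp
  have "det ?M = (\<Sum>i<2. ?M $$ (i,0) * cofactor ?M i 0)"
    by (rule laplace_expansion_column[OF M]) simp
  also have "\<dots> = ?M $$ (0,0) * cofactor ?M 0 0 + ?M $$ (1,0) * cofactor ?M 1 0"
    by (simp add: numeral_2_eq_2)
  also have "cofactor ?M 0 0 = f (1,1)"
    unfolding cofactor_def by (subst det_single) (auto simp: mat_delete_def)
  also have "cofactor ?M 1 0 = - f (0,1)"
    unfolding cofactor_def by (subst det_single) (auto simp: mat_delete_def)
  finally show ?thesis by simp
qed

lemma triple_prod_index:
  fixes Bi :: "real mat"
  assumes Bi: "Bi \<in> carrier_mat k k" and x: "x < p" and y: "y < p'"
  shows "(mat p k (\<lambda>(x,i). dd x i) * Bi * mat k p' (\<lambda>(j,y). cc j y)) $$ (x,y)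
         = (\<Sum>j<k. (\<Sum>i<k. dd x i * Bi $$ (i,j)) * cc j y)"
  using Bi x y by (simp add: scalar_prod_def atLeast0LessThan row_def col_def)

definition subm :: "nat \<Rightarrow> (nat \<Rightarrow> nat \<Rightarrow> real) \<Rightarrow> nat \<Rightarrow> nat \<Rightarrow> real mat" where
  "subm k a r c = mat (k+1) (k+1) (\<lambda>(i,j). a (if i < k then i else r) (if j < k then j else c))"

lemma DJ_inv:
  fixes a :: "nat \<Rightarrow> nat \<Rightarrow> real"
  assumes nz: "det (mat k k (\<lambda>(i,j). a i j)) \<noteq> 0"
  shows "det (mat (k+2) (k+2) (\<lambda>(i,j). a i j)) * det (mat k k (\<lambda>(i,j). a i j))
       = det (subm k a k k) * det (subm k a (k+1) (k+1)) - det (subm k a (k+1) k) * det (subm k a k (k+1))"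
proof -
  define Bm where "Bm = mat k k (\<lambda>(i,j). a i j)"
  define dB where "dB = det Bm"
  define Bi where "Bi = (1 / dB) \<cdot>\<^sub>m adj_mat Bm"
  have Bm: "Bm \<in> carrier_mat k k" by (simp add: Bm_def)
  have Bi: "Bi \<in> carrier_mat k k" unfolding Bi_def using adj_mat(1)[OF Bm] by simp
  have dB: "dB \<noteq> 0" using nz by (simp add: dB_def Bm_def)
  have BBi: "Bm * Bi = 1\<^sub>m k"
  proof -
    have "Bm * Bi = (1 / dB) \<cdot>\<^sub>m (Bm * adj_mat Bm)"
      unfolding Bi_def by (rule mult_smult_distrib[OF Bm adj_mat(1)[OF Bm]])
    also have "\<dots> = (1 / dB) \<cdot>\<^sub>m (dB \<cdot>\<^sub>m 1\<^sub>m k)" using adj_mat(2)[OF Bm] by (simp add: dB_def)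
    also have "\<dots> = 1\<^sub>m k" using dB by (intro eq_matI) auto
    finally show ?thesis .
  qed
  define q where "q r c = (\<Sum>j<k. (\<Sum>i<k. a r i * Bi $$ (i,j)) * a j c)" for r c
  have sub: "det (subm k a r c) = dB * (a r c - q r c)" for r c
  proof -
    have eq: "subm k a r c = four_block_mat Bm (mat k 1 (\<lambda>(i,j). a i c)) (mat 1 k (\<lambda>(i,j). a r j)) (mat 1 1 (\<lambda>_. a r c))"
      by (rule eq_matI) (auto simp: subm_def Bm_def)
    have "det (subm k a r c) = dB * det (mat 1 1 (\<lambda>_. a r c) - mat 1 k (\<lambda>(i,j). a r j) * Bi * mat k 1 (\<lambda>(i,j). a i c))"
      unfolding eq dB_def by (rule schur_det[OF Bm _ _ _ Bi BBi]) auto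
    also have "det (mat 1 1 (\<lambda>_. a r c) - mat 1 k (\<lambda>(i,j). a r j) * Bi * mat k 1 (\<lambda>(i,j). a i c)) = a r c - q r c"
    proof -
      have "det (mat 1 1 (\<lambda>_. a r c) - mat 1 k (\<lambda>(i,j). a r j) * Bi * mat k 1 (\<lambda>(i,j). a i c))
          = (mat 1 1 (\<lambda>_. a r c) - mat 1 k (\<lambda>(i,j). a r j) * Bi * mat k 1 (\<lambda>(i,j). a i c)) $$ (0,0)"
        by (rule det_single) (use Bi in \<open>auto intro!: minus_carrier_mat\<close>)
      also have "\<dots> = a r c - q r c"
        using triple_prod_index[OF Bi, of 0 1 0 1 "\<lambda>x i. a r i" "\<lambda>j y. a j c"] Bi
        by (simp add: q_def)
      finally show ?thesis .
    qed
    finally show ?thesis .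
  qed
  have full: "det (mat (k+2) (k+2) (\<lambda>(i,j). a i j)) = dB * ((a k k - q k k) * (a (k+1) (k+1) - q (k+1) (k+1))
        - (a k (k+1) - q k (k+1)) * (a (k+1) k - q (k+1) k))"
  proof -
    have eq: "mat (k+2) (k+2) (\<lambda>(i,j). a i j) = four_block_mat Bm (mat k 2 (\<lambda>(i,j). a i (k+j)))
         (mat 2 k (\<lambda>(i,j). a (k+i) j)) (mat 2 2 (\<lambda>(i,j). a (k+i) (k+j)))"
      by (rule eq_matI) (auto simp: Bm_def)
    have "det (mat (k+2) (k+2) (\<lambda>(i,j). a i j)) = dB * det (mat 2 2 (\<lambda>(i,j). a (k+i) (k+j))
          - mat 2 k (\<lambda>(i,j). a (k+i) j) * Bi * mat k 2 (\<lambda>(i,j). a i (k+j)))"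
      unfolding eq dB_def by (rule schur_det[OF Bm _ _ _ Bi BBi]) auto
    also have "mat 2 2 (\<lambda>(i,j). a (k+i) (k+j)) - mat 2 k (\<lambda>(i,j). a (k+i) j) * Bi * mat k 2 (\<lambda>(i,j). a i (k+j))
        = mat 2 2 (\<lambda>(x,y). a (k+x) (k+y) - q (k+x) (k+y))"
    proof (rule eq_matI)
      fix x y assume "x < dim_row (mat 2 2 (\<lambda>(x,y). a (k+x) (k+y) - q (k+x) (k+y)))"
        "y < dim_col (mat 2 2 (\<lambda>(x,y). a (k+x) (k+y) - q (k+x) (k+y)))"
      then have x: "x < 2" and y: "y < 2" by auto
      show "(mat 2 2 (\<lambda>(i,j). a (k+i) (k+j)) - mat 2 k (\<lambda>(i,j). a (k+i) j) * Bi * mat k 2 (\<lambda>(i,j). a i (k+j))) $$ (x,y)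
          = mat 2 2 (\<lambda>(x,y). a (k+x) (k+y) - q (k+x) (k+y)) $$ (x,y)"
        using triple_prod_index[OF Bi x y, of "\<lambda>x i. a (k+x) i" "\<lambda>j y. a j (k+y)"] x y Bi
        by (simp add: q_def)
    qed (use Bi in auto)
    also have "det (mat 2 2 (\<lambda>(x,y). a (k+x) (k+y) - q (k+x) (k+y))) =
        (a k k - q k k) * (a (k+1) (k+1) - q (k+1) (k+1)) - (a k (k+1) - q k (k+1)) * (a (k+1) k - q (k+1) k)"
      by (simp add: det_2x2)
    finally show ?thesis .
  qed
  show ?thesis unfolding full sub by (simp add: dB_def Bm_def algebra_simps)
qed

lemma det_cont:
  fixes F :: "nat \<Rightarrow> nat \<Rightarrow> real \<Rightarrow> real"
  assumes "\<And>i j. continuous (at t0) (F i j)"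
  shows "continuous (at t0) (\<lambda>t. det (mat n n (\<lambda>(i,j). F i j t)))"
  unfolding det_mat_expand by (intro continuous_intros assms)

lemma zero_from_cont:
  fixes h :: "real \<Rightarrow> real"
  assumes c: "continuous (at 0) h" and Z: "finite Z" and hz: "\<And>t. t \<notin> Z \<Longrightarrow> h t = 0"
  shows "h 0 = 0"
proof (rule ccontr)
  assume h0: "h 0 \<noteq> 0"
  have "h \<midarrow>0\<rightarrow> h 0" using c by (simp add: isCont_def continuous_at)
  from LIM_D[OF this, of "\<bar>h 0\<bar>"] h0 obtain s where s: "s > 0"
    and hs: "\<And>t. t \<noteq> 0 \<and> norm (t - 0) < s \<Longrightarrow> norm (h t - h 0) < \<bar>h 0\<bar>" by auto
  have "{0<..<s} \<subseteq> Z"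
  proof
    fix t assume t: "t \<in> {0<..<s}"
    then have "norm (h t - h 0) < \<bar>h 0\<bar>" using hs[of t] by auto
    then have "h t \<noteq> 0" by auto
    then show "t \<in> Z" using hz by blast
  qed
  then have "finite {0<..<s}" using Z finite_subset by blast
  then show False using infinite_Ioo[OF s] by simp
qed

lemma DJ:
  fixes a :: "nat \<Rightarrow> nat \<Rightarrow> real"
  shows "det (mat (k+2) (k+2) (\<lambda>(i,j). a i j)) * det (mat k k (\<lambda>(i,j). a i j))
       = det (subm k a k k) * det (subm k a (k+1) (k+1)) - det (subm k a (k+1) k) * det (subm k a k (k+1))"
proof -
  define dl where "dl i j = (if i = j \<and> i < k then 1 else (0::real))" for i j
  define pa where "pa t i j = a i j + t * dl i j" for t i j
  define h where "h t = det (mat (k+2) (k+2) (\<lambda>(i,j). pa t i j)) * det (mat k k (\<lambda>(i,j). pa t i j))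
       - (det (subm k (pa t) k k) * det (subm k (pa t) (k+1) (k+1)) - det (subm k (pa t) (k+1) k) * det (subm k (pa t) k (k+1)))" for t
  define Bm where "Bm = mat k k (\<lambda>(i,j). a i j)"
  have Bm: "Bm \<in> carrier_mat k k" by (simp add: Bm_def)
  define Z where "Z = {t. poly (char_poly (- Bm)) t = 0}"
  have "char_poly (- Bm) \<noteq> 0"
  proof
    assume "char_poly (- Bm) = 0"
    moreover have "coeff (char_poly (- Bm)) k = 1" using degree_monic_char_poly[of "- Bm" k] Bm by auto
    ultimately show False by simp
  qed
  then have Z: "finite Z" unfolding Z_def by (rule poly_roots_finite)
  have detB: "det (mat k k (\<lambda>(i,j). pa t i j)) = poly (char_poly (- Bm)) t" for t
  proof -
    have "poly (char_poly (- Bm)) t = det (- (char_matrix (- Bm) t))"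
      by (rule char_poly_matrix[of _ k]) (use Bm in auto)
    also have "- (char_matrix (- Bm) t) = mat k k (\<lambda>(i,j). pa t i j)"
      by (rule eq_matI) (auto simp: char_matrix_def Bm_def pa_def dl_def)
    finally show ?thesis by simp
  qed
  have hz: "h t = 0" if t: "t \<notin> Z" for t
  proof -
    have "det (mat k k (\<lambda>(i,j). pa t i j)) \<noteq> 0" using t detB by (simp add: Z_def)
    from DJ_inv[of k "pa t", OF this] show ?thesis by (simp add: h_def)
  qed
  have ca: "continuous (at 0) (\<lambda>t. pa t i j)" for i j
    unfolding pa_def by (intro continuous_intros)
  have c: "continuous (at 0) h"
    unfolding h_def subm_def by (intro continuous_intros det_cont ca)
  have "h 0 = 0" by (rule zero_from_cont[OF c Z hz])
  moreover have "pa 0 = a" by (simp add: pa_def fun_eq_iff)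
  ultimately show ?thesis by (simp add: h_def)
qed

lemma wm_cong: "m = m' \<Longrightarrow> (\<And>j. j < m \<Longrightarrow> g j = g' j) \<Longrightarrow> wm m g x = wm m' g' x"
  unfolding wm_def by (rule eq_matI) auto

lemma wm'_cong: "m = m' \<Longrightarrow> (\<And>j. j < m \<Longrightarrow> g j = g' j) \<Longrightarrow> wm' m g x = wm' m' g' x"
  unfolding wm'_def by (rule eq_matI) auto

lemma wm_DJ:
  "det (wm (k+2) g x) * det (wm k g x) =
     det (wm (k+1) g x) * det (wm' (k+1) (\<lambda>j. if j = k then g (k+1) else g j) x)
   - det (wm' (k+1) g x) * det (wm (k+1) (\<lambda>j. if j = k then g (k+1) else g j) x)"
proof -
  define a where "a i j = efp (g j) i x" for i j
  have e0: "wm (k+2) g x = mat (k+2) (k+2) (\<lambda>(i,j). a i j)" "wm k g x = mat k k (\<lambda>(i,j). a i j)"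
    by (simp_all add: wm_def a_def)
  have e1: "subm k a k k = wm (k+1) g x"
    by (rule eq_matI) (auto simp: subm_def wm_def a_def less_Suc_eq)
  have e2: "subm k a (k+1) (k+1) = wm' (k+1) (\<lambda>j. if j = k then g (k+1) else g j) x"
    by (rule eq_matI) (auto simp: subm_def wm'_def a_def less_Suc_eq)
  have e3: "subm k a (k+1) k = wm' (k+1) g x"
    by (rule eq_matI) (auto simp: subm_def wm'_def a_def less_Suc_eq)
  have e4: "subm k a k (k+1) = wm (k+1) (\<lambda>j. if j = k then g (k+1) else g j) x"
    by (rule eq_matI) (auto simp: subm_def wm_def a_def less_Suc_eq)
  show ?thesis using DJ[of k a] unfolding e0 e1 e2 e3 e4 .
qed

lemma sh_om0: "sh (om 0) = onef"
  by (simp add: sh_def om_def onef_def)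

lemma W_G1: "det (wm (n+2) (\<lambda>j. if j \<le> n then om j else onef) y)
   = (-1)^(n+1) * ((fact n)^2 * exp (real n * y) * det (wm n om y))"
proof -
  have "det (wm (Suc (n+1)) (\<lambda>j. if j \<le> n then om j else onef) y)
     = (-1)^(n+1) * det (wm (n+1) (\<lambda>j. sh ((\<lambda>j. if j \<le> n then om j else onef) (if j < n+1 then j else Suc j))) y)"
    by (rule wm_one) auto
  also have "wm (n+1) (\<lambda>j. sh ((\<lambda>j. if j \<le> n then om j else onef) (if j < n+1 then j else Suc j))) y
      = wm (Suc n) (\<lambda>j. sh (om j)) y"
    by (rule wm_cong) auto
  also have "det (wm (Suc n) (\<lambda>j. sh (om j)) y) = (-1)^0 * det (wm n (\<lambda>j. sh ((\<lambda>j. sh (om j)) (if j < 0 then j else Suc j))) y)"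
    by (rule wm_one) (auto simp: sh_om0)
  also have "\<dots> = (fact n)^2 * exp (real n * y) * det (wm n om y)"
    using wm_pascal[of n y] by simp
  finally show ?thesis by simp
qed

lemma W_G: "det (wm (n+3) (\<lambda>j. if j \<le> n then om j else if j = n+1 then onef else om (n+1)) y)
   = (-1)^(n+1) * ((fact (n+1))^2 * exp (real (n+1) * y) * det (wm (n+1) om y))"
proof -
  have "det (wm (Suc (n+2)) (\<lambda>j. if j \<le> n then om j else if j = n+1 then onef else om (n+1)) y)
     = (-1)^(n+1) * det (wm (n+2) (\<lambda>j. sh ((\<lambda>j. if j \<le> n then om j else if j = n+1 then onef else om (n+1)) (if j < n+1 then j else Suc j))) y)"
    by (rule wm_one) auto
  also have "wm (n+2) (\<lambda>j. sh ((\<lambda>j. if j \<le> n then om j else if j = n+1 then onef else om (n+1)) (if j < n+1 then j else Suc j))) y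
      = wm (Suc (n+1)) (\<lambda>j. sh (om j)) y"
    by (rule wm_cong) (auto simp: less_Suc_eq)
  also have "det (wm (Suc (n+1)) (\<lambda>j. sh (om j)) y) = (-1)^0 * det (wm (n+1) (\<lambda>j. sh ((\<lambda>j. sh (om j)) (if j < 0 then j else Suc j))) y)"
    by (rule wm_one) (auto simp: sh_om0)
  also have "\<dots> = (fact (n+1))^2 * exp (real (n+1) * y) * det (wm (n+1) om y)"
    using wm_pascal[of "n+1" y] by simp
  finally show ?thesis by (simp add: numeral_3_eq_3)
qed

lemma inner_prod: "(\<Prod>i\<in>{1..<j}. real (j - i)) = fact (j - 1)"
proof -
  have "(\<Prod>i\<in>{1..<j}. real (j - i)) = (\<Prod>t\<in>{1..j-1}. real t)"
    by (rule prod.reindex_bij_witness[of _ "\<lambda>t. j - t" "\<lambda>i. j - i"]) auto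
  also have "\<dots> = fact (j - 1)" by (simp add: fact_prod)
  finally show ?thesis .
qed

definition sprod :: "nat \<Rightarrow> real" where
  "sprod n = (\<Prod>j\<in>{1..n - 1}. \<Prod>i\<in>{1..<j}. real (j - i))"

lemma sprod_fact: "sprod n = (\<Prod>j\<in>{1..n - 1}. fact (j - 1))"
  unfolding sprod_def inner_prod ..

lemma sprod_Suc: "n \<ge> 1 \<Longrightarrow> sprod (Suc n) = sprod n * fact (n - 1)"
proof -
  assume n: "n \<ge> 1"
  then obtain k where k: "n = Suc k" by (cases n) auto
  show ?thesis unfolding sprod_fact k by (simp add: prod.cl_ivl_Suc)
qed

lemma sprod_pos: "sprod n > 0"
  unfolding sprod_fact by (rule prod_pos) auto

lemma c_const_eq: "c_const n = inverse (fact (n - 1) * sprod n)"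
  by (simp add: c_const_def sprod_def)

lemma c_rel: assumes n: "n \<ge> 1"
  shows "real (n+1) * c_const n * c_const (n+2) = (c_const (n+1))^2"
proof -
  define S where "S = sprod n"
  have S: "S > 0" using sprod_pos by (simp add: S_def)
  have s1: "sprod (n+1) = S * fact (n - 1)" using sprod_Suc[OF n] by (simp add: S_def)
  have s2: "sprod (n+2) = S * fact (n - 1) * fact n"
    using sprod_Suc[of "n+1"] s1 n by simp
  obtain k where k: "n = Suc k" using n by (cases n) auto
  have f1: "fact (n+1) = real (n+1) * fact n" by simp
  have c0: "c_const n = inverse (fact k * S)" using k by (simp add: c_const_eq S_def)
  have c1: "c_const (n+1) = inverse (fact n * (S * fact k))" using s1 k by (simp add: c_const_eq)
  define N where "N = real (n+1)"
  have N: "N > 0" by (simp add: N_def)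
  have c2: "c_const (n+2) = inverse (N * fact n * (S * fact k * fact n))"
    using s2 k f1 by (simp add: c_const_eq N_def)
  have fk: "(fact k :: real) > 0" and fn: "(fact n :: real) > 0" by simp_all
  show ?thesis unfolding c0 c1 c2 N_def[symmetric] using S fk fn N
    by (simp add: field_simps power2_eq_square)
qed

lemma P_eq: "P m = (\<lambda>y. c_const m * exp (- (real m * (real m - 1) / 2) * y) * det (wm m om y))"
  by (simp add: fun_eq_iff P_def wronskian_wm)

lemma P_deriv: assumes m: "m \<ge> 1"
  shows "deriv (P m) x = c_const m * (exp (- (real m * (real m - 1) / 2) * x) * (- (real m * (real m - 1) / 2)) * det (wm m om x)
      + exp (- (real m * (real m - 1) / 2) * x) * det (wm' m om x))"
proof -
  have hT: "((\<lambda>y. det (wm m om y)) has_real_derivative det (wm' m om x)) (at x)"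
    by (rule wm_deriv[OF m])
  have "(P m has_real_derivative c_const m * (exp (- (real m * (real m - 1) / 2) * x) * (- (real m * (real m - 1) / 2)) * det (wm m om x)
      + exp (- (real m * (real m - 1) / 2) * x) * det (wm' m om x))) (at x)"
  proof -
    have e: "((\<lambda>y. exp (- (real m * (real m - 1) / 2) * y)) has_real_derivative
        exp (- (real m * (real m - 1) / 2) * x) * (- (real m * (real m - 1) / 2))) (at x)"
      by (auto intro!: derivative_eq_intros)
    have "((\<lambda>y. c_const m * exp (- (real m * (real m - 1) / 2) * y) * det (wm m om y)) has_real_derivative
      c_const m * (exp (- (real m * (real m - 1) / 2) * x) * (- (real m * (real m - 1) / 2))) * det (wm m om x)
      + det (wm' m om x) * (c_const m * exp (- (real m * (real m - 1) / 2) * x))) (at x)"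
      by (rule DERIV_mult[OF DERIV_cmult[OF e] hT])
    then show ?thesis unfolding P_eq by (simp add: algebra_simps)
  qed
  then show ?thesis by (rule DERIV_imp_deriv)
qed

lemma sign_cancel:
  fixes s L X Y :: real
  assumes h1: "s * s = 1" and h2: "s * L = s * X - s * Y"
  shows "L = X - Y"
proof -
  have "L = (s * s) * L" using h1 by simp
  also have "\<dots> = s * (s * L)" by (simp only: mult.assoc)
  also have "\<dots> = s * (s * X - s * Y)" using h2 by simp
  also have "\<dots> = (s * s) * X - (s * s) * Y" by (simp add: algebra_simps)
  also have "\<dots> = X - Y" using h1 by simp
  finally show ?thesis .
qed

theorem lemma6p3:
  fixes n :: nat and x :: real
  assumes "n \<ge> 1"
  shows "deriv (P n) x * P (n + 2) x - P n x * deriv (P (n + 2)) x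
         - real (n + 1) * P n x * P (n + 2) x + real (n + 1) * (P (n + 1) x)^2 = 0"
proof -
  have n: "n \<ge> 1" by fact
  define T where "T m y = det (wm m om y)" for m y
  define T' where "T' m y = det (wm' m om y)" for m y
  define G where "G j = (if j \<le> n then om j else if j = n+1 then onef else om (n+1))" for j
  define G1 where "G1 j = (if j \<le> n then om j else onef)" for j
  define G2 where "G2 j = (if j = n+1 then G (n+1+1) else G j)" for j
  have DJ1: "det (wm (n+1+2) G x) * det (wm (n+1) G x) =
     det (wm (n+1+1) G x) * det (wm' (n+1+1) G2 x) - det (wm' (n+1+1) G x) * det (wm (n+1+1) G2 x)"
    unfolding G2_def by (rule wm_DJ)
  have a1: "det (wm (n+1+2) G x) = (-1)^(n+1) * ((fact (n+1))^2 * exp (real (n+1) * x) * T (n+1) x)"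
  proof -
    have "wm (n+1+2) G x = wm (n+3) (\<lambda>j. if j \<le> n then om j else if j = n+1 then onef else om (n+1)) x"
      by (rule wm_cong) (auto simp: G_def)
    then show ?thesis using W_G[of n x] by (simp add: T_def)
  qed
  have a2: "det (wm (n+1) G x) = T (n+1) x"
  proof -
    have "wm (n+1) G x = wm (n+1) om x" by (rule wm_cong) (auto simp: G_def)
    then show ?thesis by (simp add: T_def)
  qed
  have a3: "wm (n+1+1) G y = wm (n+2) G1 y" for y by (rule wm_cong) (auto simp: G_def G1_def)
  have a4: "wm' (n+1+1) G x = wm' (n+2) G1 x" by (rule wm'_cong) (auto simp: G_def G1_def)
  have a5: "wm (n+1+1) G2 x = wm (n+2) om x" by (rule wm_cong) (auto simp: G_def G2_def less_Suc_eq)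
  have a6: "wm' (n+1+1) G2 x = wm' (n+2) om x" by (rule wm'_cong) (auto simp: G_def G2_def less_Suc_eq)
  have g1: "det (wm (n+2) G1 y) = (-1)^(n+1) * ((fact n)^2 * exp (real n * y) * T n y)" for y
    using W_G1[of n y] by (simp add: G1_def[abs_def] T_def)
  have g1': "det (wm' (n+2) G1 x) = (-1)^(n+1) * ((fact n)^2 * (exp (real n * x) * real n * T n x + exp (real n * x) * T' n x))"
  proof -
    have d1: "((\<lambda>y. det (wm (n+2) G1 y)) has_real_derivative det (wm' (n+2) G1 x)) (at x)"
      by (rule wm_deriv) simp
    have hT: "((\<lambda>y. T n y) has_real_derivative T' n x) (at x)"
      unfolding T_def T'_def by (rule wm_deriv[OF n])
    have d2: "((\<lambda>y. (-1)^(n+1) * ((fact n)^2 * exp (real n * y) * T n y)) has_real_derivative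
        (-1)^(n+1) * ((fact n)^2 * (exp (real n * x) * real n * T n x + exp (real n * x) * T' n x))) (at x)"
      by (auto intro!: derivative_eq_intros hT simp: algebra_simps)
    show ?thesis using DERIV_unique[OF d1 d2[folded g1]] .
  qed
  have R0: "(-1)^(n+1) * ((fact (n+1))^2 * exp (real (n+1) * x) * T (n+1) x) * T (n+1) x
     = (-1)^(n+1) * ((fact n)^2 * exp (real n * x) * T n x) * T' (n+2) x
       - (-1)^(n+1) * ((fact n)^2 * (exp (real n * x) * real n * T n x + exp (real n * x) * T' n x)) * T (n+2) x"
    using DJ1 unfolding a1 a2 a3 a4 a5 a6 g1 g1' by (simp add: T_def T'_def)
  have R0': "((fact (n+1))^2 * exp (real (n+1) * x) * T (n+1) x) * T (n+1) x
     = ((fact n)^2 * exp (real n * x) * T n x) * T' (n+2) x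
       - ((fact n)^2 * (exp (real n * x) * real n * T n x + exp (real n * x) * T' n x)) * T (n+2) x"
  proof (rule sign_cancel[of "(-1)^(n+1)"])
    show "((-1::real)^(n+1)) * (-1)^(n+1) = 1" by (simp add: power_mult_distrib[symmetric])
  qed (use R0 in \<open>simp only: mult.assoc\<close>)
  have R: "T n x * T' (n+2) x - real n * T n x * T (n+2) x - T' n x * T (n+2) x
      = (real n + 1)^2 * exp x * (T (n+1) x)^2"
  proof -
    define K where "K = (fact n)^2 * exp (real n * x)"
    have K: "K \<noteq> 0" by (simp add: K_def)
    have f: "(fact (n+1) :: real) = (real n + 1) * fact n" by simp
    have e: "exp (real (n+1) * x) = exp (real n * x) * exp x" by (simp add: exp_add[symmetric] algebra_simps)
    have "K * ((real n + 1)^2 * exp x * (T (n+1) x)^2) = K * (T n x * T' (n+2) x - real n * T n x * T (n+2) x - T' n x * T (n+2) x)"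
      using R0' unfolding f e K_def by (simp add: algebra_simps power2_eq_square)
    then show ?thesis using K by simp
  qed
  define A where "A = exp (- (real n * (real n - 1) / 2) * x)"
  define B where "B = exp (- (real (n+1) * (real (n+1) - 1) / 2) * x)"
  define C where "C = exp (- (real (n+2) * (real (n+2) - 1) / 2) * x)"
  have ABC: "B^2 = A * C * exp x"
  proof -
    have "A * C * exp x = exp (- (real n * (real n - 1) / 2) * x + - (real (n+2) * (real (n+2) - 1) / 2) * x + x)"
      by (simp only: A_def C_def exp_add)
    also have "\<dots> = exp (- (real (n+1) * (real (n+1) - 1) / 2) * x + - (real (n+1) * (real (n+1) - 1) / 2) * x)"
      by (rule arg_cong[where f = exp]) (simp add: field_simps)
    also have "\<dots> = B^2" by (simp only: B_def exp_add power2_eq_square)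
    finally show ?thesis by simp
  qed
  have cr: "real (n+1) * c_const n * c_const (n+2) = (c_const (n+1))^2" by (rule c_rel[OF n])
  have Pn: "P n x = c_const n * A * T n x" by (simp add: P_eq A_def T_def)
  have Pn1: "P (n+1) x = c_const (n+1) * B * T (n+1) x" by (simp add: P_eq B_def T_def)
  have Pn2: "P (n+2) x = c_const (n+2) * C * T (n+2) x" by (simp add: P_eq C_def T_def)
  have dPn: "deriv (P n) x = c_const n * (A * (- (real n * (real n - 1) / 2)) * T n x + A * T' n x)"
    using P_deriv[OF n, of x] by (simp add: A_def T_def T'_def)
  have dPn2: "deriv (P (n+2)) x = c_const (n+2) * (C * (- (real (n+2) * (real (n+2) - 1) / 2)) * T (n+2) x + C * T' (n+2) x)"
    using P_deriv[of "n+2" x] by (simp add: C_def T_def T'_def)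
  have sq: "real (n + 1) * (P (n + 1) x)^2 = c_const n * c_const (n+2) * A * C * ((real n + 1)^2 * exp x * (T (n+1) x)^2)"
  proof -
    have "real (n + 1) * (P (n + 1) x)^2 = real (n+1) * (c_const (n+1))^2 * B^2 * (T (n+1) x)^2"
      unfolding Pn1 by (simp add: power_mult_distrib)
    also have "\<dots> = real (n+1) * (real (n+1) * c_const n * c_const (n+2)) * (A * C * exp x) * (T (n+1) x)^2"
      unfolding cr ABC ..
    finally show ?thesis by (simp add: algebra_simps power2_eq_square)
  qed
  show ?thesis
    unfolding sq R[symmetric] dPn dPn2 Pn Pn2
    by (simp add: field_simps)
qed

end
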